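(* Let $D$ be a strong nonseparable digraph, let $H$ be a strong nonseparable subdigraph of $D$, and let $P=(x_0,x_1,\ldots,x_{r-1},x_r)$ be an ear of $H$ in $D$ with length $l(P)=r\geq 2$. If $H$ has a kernel $N$ and $H'=H\cup P$ has no kernel, then one of the following holds: (1) $x_0,x_r\in N$ and $l(P)$ is odd; (2) $x_0\in N$, $x_r\notin N$ and $l(P)$ is even.
   Context: All digraphs are finite, without loops or multiple arcs. Paths and cycles are directed; the length of a path is its number of arcs. A digraph is strong if for every ordered pair of vertices $x,y$ there is a directed path from $x$ to $y$; it is nonseparable if its underlying undirected graph is nonseparable (has no cut vertex). For a subdigraph $H$ of $D$, an ear of $H$ in $D$ is a directed path $(x_0,\ldots,x_r)$ in $D$ whose end vertices $x_0,x_r$ lie in $H$ and whose internal vertices $x_1,\ldots,x_{r-1}$ do not lie in $H$ (or a directed cycle with exactly one vertex $x_0=x_r$ in $H$). A kernel of a digraph is a set $N$ of vertices that is independent (no arc between two of its vertices) and absorbent (every vertex not in $N$ has an out-neighbour in $N$). *)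

theory Defs
  imports Main
begin

definition digraph :: "'a set \<Rightarrow> ('a \<times> 'a) set \<Rightarrow> bool" where
  "digraph V A \<longleftrightarrow> finite V \<and> A \<subseteq> V \<times> V \<and> (\<forall>x. (x, x) \<notin> A)"

definition subdigraph :: "'a set \<Rightarrow> ('a \<times> 'a) set \<Rightarrow> 'a set \<Rightarrow> ('a \<times> 'a) set \<Rightarrow> bool" where
  "subdigraph VH AH V A \<longleftrightarrow> VH \<subseteq> V \<and> AH \<subseteq> A \<and> AH \<subseteq> VH \<times> VH"

definition strong :: "'a set \<Rightarrow> ('a \<times> 'a) set \<Rightarrow> bool" where
  "strong V A \<longleftrightarrow> (\<forall>x\<in>V. \<forall>y\<in>V. (x, y) \<in> (A \<inter> V \<times> V)\<^sup>*)"

definition und_connected :: "'a set \<Rightarrow> ('a \<times> 'a) set \<Rightarrow> bool" where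
  "und_connected S A \<longleftrightarrow>
     (\<forall>x\<in>S. \<forall>y\<in>S. (x, y) \<in> {(u, v). u \<in> S \<and> v \<in> S \<and> ((u, v) \<in> A \<or> (v, u) \<in> A)}\<^sup>*)"

definition nonseparable :: "'a set \<Rightarrow> ('a \<times> 'a) set \<Rightarrow> bool" where
  "nonseparable V A \<longleftrightarrow> und_connected V A \<and> (\<forall>v\<in>V. und_connected (V - {v}) A)"

definition kernel :: "'a set \<Rightarrow> ('a \<times> 'a) set \<Rightarrow> 'a set \<Rightarrow> bool" where
  "kernel V A N \<longleftrightarrow> N \<subseteq> V \<and> (\<forall>x\<in>N. \<forall>y\<in>N. (x, y) \<notin> A)
                     \<and> (\<forall>x\<in>V - N. \<exists>y\<in>N. (x, y) \<in> A)"

definition has_kernel :: "'a set \<Rightarrow> ('a \<times> 'a) set \<Rightarrow> bool" where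
  "has_kernel V A \<longleftrightarrow> (\<exists>N. kernel V A N)"

definition path_arcs :: "'a list \<Rightarrow> ('a \<times> 'a) set" where
  "path_arcs xs = {(xs ! i, xs ! Suc i) | i. Suc i < length xs}"

text \<open>Ear of H=(VH,AH) in D=(V,A), given as vertex list [x_0,...,x_r]: a directed path
  (or a directed cycle when x_0 = x_r) in D whose end vertices lie in H and whose
  internal vertices are distinct and outside H. Its length is r = length xs - 1.\<close>
definition ear :: "'a set \<Rightarrow> ('a \<times> 'a) set \<Rightarrow> 'a set \<Rightarrow> 'a list \<Rightarrow> bool" where
  "ear V A VH xs \<longleftrightarrow> length xs \<ge> 2 \<and> path_arcs xs \<subseteq> A
     \<and> hd xs \<in> VH \<and> last xs \<in> VH
     \<and> distinct (butlast (tl xs)) \<and> set (butlast (tl xs)) \<inter> VH = {}"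

end

theory Submission
  imports Defs
begin

theorem mainTheorem10:
  fixes V VH :: "'a set" and A AH :: "('a \<times> 'a) set" and xs :: "'a list" and N :: "'a set"
  assumes "digraph V A" and "strong V A" and "nonseparable V A"
    and "subdigraph VH AH V A" and "strong VH AH" and "nonseparable VH AH"
    and "ear V A VH xs" and "length xs - 1 \<ge> 2"
    and "kernel VH AH N"
    and "\<not> has_kernel (VH \<union> set xs) (AH \<union> path_arcs xs)"
  shows "(hd xs \<in> N \<and> last xs \<in> N \<and> odd (length xs - 1))
       \<or> (hd xs \<in> N \<and> last xs \<notin> N \<and> even (length xs - 1))"
proof (rule ccontr)
  assume neg: "\<not> ?thesis"
  define r where "r = length xs - 1"
  define c :: nat where "c = (if last xs \<in> N then 0 else 1)"
  define N' where "N' = N \<union> {xs ! i | i. 0 < i \<and> i < r \<and> even (r - i + c)}"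
  have len: "length xs = Suc r" using assms(8) r_def by auto
  have ne: "xs \<noteq> []" using len by auto
  have hd0: "hd xs = xs ! 0" using ne by (simp add: hd_conv_nth)
  have lastr: "last xs = xs ! r" using ne len by (simp add: last_conv_nth)
  have ear: "hd xs \<in> VH" "last xs \<in> VH" "distinct (butlast (tl xs))"
    "set (butlast (tl xs)) \<inter> VH = {}" "path_arcs xs \<subseteq> A"
    using assms(7) unfolding ear_def by auto
  have kN: "N \<subseteq> VH" "\<forall>x\<in>N. \<forall>y\<in>N. (x, y) \<notin> AH" "\<forall>x\<in>VH - N. \<exists>y\<in>N. (x, y) \<in> AH"
    using assms(9) unfolding kernel_def by auto
  have AHsub: "AH \<subseteq> VH \<times> VH" using assms(4) unfolding subdigraph_def by auto
  have bt: "butlast (tl xs) ! m = xs ! Suc m" if "m < r - 1" for m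
    using that len by (simp add: nth_butlast nth_tl)
  have lbt: "length (butlast (tl xs)) = r - 1" using len by simp
  have intnot: "xs ! j \<notin> VH" if "0 < j" "j < r" for j
  proof -
    have "butlast (tl xs) ! (j - 1) \<in> set (butlast (tl xs))"
      using that lbt by (intro nth_mem) auto
    moreover have "butlast (tl xs) ! (j - 1) = xs ! j" using bt[of "j - 1"] that by auto
    ultimately show ?thesis using ear(4) by auto
  qed
  have intinj: "k = j" if "0 < j" "j < r" "0 < k" "k < r" "xs ! k = xs ! j" for j k
  proof -
    have "butlast (tl xs) ! (j - 1) = butlast (tl xs) ! (k - 1)"
      using bt[of "j - 1"] bt[of "k - 1"] that by auto
    then have "j - 1 = k - 1" using ear(3) lbt that nth_eq_iff_index_eq by (metis less_diff_conv2 le_add_diff_inverse2 less_imp_le_nat linorder_not_le not_less_eq_eq One_nat_def Suc_leI diff_less_mono)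
    then show ?thesis using that by auto
  qed
  have memb: "xs ! j \<in> N' \<longleftrightarrow> (if j = 0 then hd xs \<in> N else even (r - j + c))" if "j \<le> r" for j
  proof (cases "j = 0 \<or> j = r")
    case True
    then have v: "xs ! j \<in> VH" using ear hd0 lastr by auto
    have "xs ! j \<in> N' \<longleftrightarrow> xs ! j \<in> N"
      unfolding N'_def using intnot v by auto
    then show ?thesis using True hd0 lastr c_def by auto
  next
    case False
    then have j: "0 < j" "j < r" using that by auto
    have "xs ! j \<notin> N" using intnot[OF j] kN(1) by auto
    then have "xs ! j \<in> N' \<longleftrightarrow> even (r - j + c)"
      unfolding N'_def using intinj[OF j] j by auto
    then show ?thesis using j by auto
  qed
  have "kernel (VH \<union> set xs) (AH \<union> path_arcs xs) N'"
    unfolding kernel_def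
  proof (intro conjI ballI)
    show "N' \<subseteq> VH \<union> set xs" unfolding N'_def using kN(1) len by auto
  next
    fix x y assume x: "x \<in> N'" and y: "y \<in> N'"
    show "(x, y) \<notin> AH \<union> path_arcs xs"
    proof
      assume "(x, y) \<in> AH \<union> path_arcs xs"
      then show False
      proof
        assume a: "(x, y) \<in> AH"
        then have "x \<in> VH" "y \<in> VH" using AHsub by auto
        then have "x \<in> N" "y \<in> N" using x y intnot unfolding N'_def by auto
        then show False using kN(2) a by auto
      next
        assume "(x, y) \<in> path_arcs xs"
        then obtain i where i: "Suc i < length xs" "x = xs ! i" "y = xs ! Suc i"
          unfolding path_arcs_def by auto
        have m1: "(if i = 0 then hd xs \<in> N else even (r - i + c))"
          using memb[of i] x i len by auto
        have m2: "even (r - Suc i + c)" using memb[of "Suc i"] y i len by auto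
        show False
        proof (cases "i = 0")
          case True
          have "length xs - 1 = r" using len by simp
          moreover have "r \<ge> 2" using assms(8) r_def by simp
          ultimately show ?thesis using m1 m2 neg c_def True by (auto split: if_splits)
        next
          case False
          then have "r - i = Suc (r - Suc i)" using i len by auto
          then show ?thesis using m1 m2 False by auto
        qed
      qed
    qed
  next
    fix x assume x: "x \<in> VH \<union> set xs - N'"
    show "\<exists>y\<in>N'. (x, y) \<in> AH \<union> path_arcs xs"
    proof (cases "x \<in> VH")
      case True
      then have "x \<in> VH - N" using x unfolding N'_def by auto
      then obtain y where "y \<in> N" "(x, y) \<in> AH" using kN(3) by auto
      then show ?thesis unfolding N'_def by auto
    next
      case False
      then obtain j where j: "j < length xs" "x = xs ! j" using x by (auto simp: in_set_conv_nth)
      have "j \<noteq> 0" "j \<noteq> r" using False j ear hd0 lastr by auto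
      then have j2: "0 < j" "j < r" using j len by auto
      have "odd (r - j + c)" using memb[of j] j j2 x by auto
      moreover have "r - j = Suc (r - Suc j)" using j2 by auto
      ultimately have "xs ! Suc j \<in> N'" using memb[of "Suc j"] j2 by auto
      moreover have "(x, xs ! Suc j) \<in> path_arcs xs"
        unfolding path_arcs_def using j j2 len by auto
      ultimately show ?thesis by auto
    qed
  qed
  then show False using assms(10) unfolding has_kernel_def by auto
qed

end
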